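(* The space $L(\omega_1)$ is a $P$-space that is not a Frolik space. In particular, there is a $P$-space that is not Frolik.
   Context: $L(\omega_1)$ is the set $\omega_1+1=\{\alpha:\alpha\le\omega_1\}$ with the topology in which every $\alpha<\omega_1$ is isolated and the sets $]\alpha,\omega_1]=\{\gamma:\alpha<\gamma\le\omega_1\}$, $\alpha<\omega_1$, form a local base at $\omega_1$. A $P$-space is a space in which every countable intersection of open sets is open. A space $X$ is Frolik if there is a sequence $\langle S_n:n<\omega\rangle$ of $\sigma$-compact spaces and a closed subset $F\subseteq\prod_{n<\omega}S_n$ such that $X$ is homeomorphic to $F$; $\sigma$-compact means a countable union of compact subspaces. *)

theory Defs
  imports "HOL-Analysis.Analysis"
begin

text \<open>The ordinal omega_1, realised as Main's successor cardinal of the natural numbers: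
  a well-order (cardinal order, hence an initial ordinal) of cardinality aleph_1.
  Its field plays the role of the set of countable ordinals {alpha. alpha < omega_1}.\<close>
abbreviation omega1 :: "nat set rel" where
  "omega1 \<equiv> cardSuc natLeq"

text \<open>L(omega_1) on the carrier omega_1 + 1: countable ordinals alpha are Some alpha,
  the top point omega_1 is None.\<close>
definition L_omega1 :: "nat set option topology" where
  "L_omega1 = topology (\<lambda>U. U \<subseteq> insert None (Some ` Field omega1) \<and>
     (None \<in> U \<longrightarrow>
        (\<exists>\<alpha>\<in>Field omega1.
           insert None (Some ` {\<gamma>\<in>Field omega1. (\<alpha>, \<gamma>) \<in> omega1 \<and> \<gamma> \<noteq> \<alpha>}) \<subseteq> U)))"

definition p_space :: "'a topology \<Rightarrow> bool" where
  "p_space X \<longleftrightarrow> (\<forall>U :: nat \<Rightarrow> 'a set. (\<forall>n. openin X (U n)) \<longrightarrow> openin X (\<Inter>n. U n))"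

definition sigma_compact_space :: "'a topology \<Rightarrow> bool" where
  "sigma_compact_space X \<longleftrightarrow>
     (\<exists>K :: nat \<Rightarrow> 'a set. (\<forall>n. compactin X (K n)) \<and> topspace X = (\<Union>n. K n))"

text \<open>Frolik space, with the factor spaces S_n carried by the type 'b.\<close>
definition frolik_space_over :: "'b itself \<Rightarrow> 'a topology \<Rightarrow> bool" where
  "frolik_space_over _ X \<longleftrightarrow>
     (\<exists>S :: nat \<Rightarrow> 'b topology. (\<forall>n. sigma_compact_space (S n)) \<and>
        (\<exists>F. closedin (product_topology S UNIV) F \<and>
             X homeomorphic_space subtopology (product_topology S UNIV) F))"

end

theory Submission imports Defs "HOL-Library.Countable_Set_Type" begin

lemma co_Card: "Card_order omega1"
  by (simp add: cardSuc_Card_order natLeq_Card_order)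

lemma co_wo: "Well_order omega1"
  using co_Card by (simp add: card_order_on_def)

lemma co_refl: "a \<in> Field omega1 \<Longrightarrow> (a,a) \<in> omega1"
  using co_wo by (auto simp: well_order_on_def linear_order_on_def partial_order_on_def preorder_on_def refl_on_def)

lemma co_trans: "(a,b) \<in> omega1 \<Longrightarrow> (b,c) \<in> omega1 \<Longrightarrow> (a,c) \<in> omega1"
  using co_wo unfolding well_order_on_def linear_order_on_def partial_order_on_def preorder_on_def trans_def by blast

lemma co_antisym: "(a,b) \<in> omega1 \<Longrightarrow> (b,a) \<in> omega1 \<Longrightarrow> a = b"
  using co_wo unfolding well_order_on_def linear_order_on_def partial_order_on_def antisym_def by blast

lemma co_total: "a \<in> Field omega1 \<Longrightarrow> b \<in> Field omega1 \<Longrightarrow> (a,b) \<in> omega1 \<or> (b,a) \<in> omega1"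
  using co_wo co_refl unfolding well_order_on_def linear_order_on_def total_on_def by metis

lemma co_field: "(a,b) \<in> omega1 \<Longrightarrow> a \<in> Field omega1 \<and> b \<in> Field omega1"
  by (auto simp: Field_def)

context includes cardinal_syntax begin

lemma co_uncountable: "uncountable (Field omega1)"
proof
  assume "countable (Field omega1)"
  then have "|Field omega1| \<le>o natLeq" by (simp add: countable_card_le_natLeq)
  moreover have "|Field omega1| =o omega1" by (rule card_of_Field_ordIso[OF co_Card])
  moreover have "natLeq <o omega1" by (rule cardSuc_greater[OF natLeq_Card_order])
  ultimately show False
    by (meson not_ordLess_ordLeq ordIso_iff_ordLeq ordLeq_transitive)
qed

lemma co_bound:
  assumes "countable B" "B \<subseteq> Field omega1"
  shows "\<exists>\<beta>\<in>Field omega1. \<forall>\<alpha>\<in>B. (\<alpha>,\<beta>) \<in> omega1"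
proof -
  have "\<exists>i \<in> Field omega1. B \<subseteq> under omega1 i"
  proof (rule cardSuc_UNION[OF natLeq_Card_order])
    show "\<not> finite (Field natLeq)" by (simp add: Field_natLeq)
    show "relChain omega1 (under omega1)"
      unfolding relChain_def under_def using co_trans by blast
    show "B \<subseteq> (\<Union>i\<in>Field omega1. under omega1 i)"
      using assms(2) co_refl unfolding under_def by blast
    show "|B| \<le>o natLeq" using assms(1) by (simp add: countable_card_le_natLeq)
  qed
  then show ?thesis unfolding under_def by blast
qed

end

definition tl1 :: "nat set \<Rightarrow> nat set option set" where
  "tl1 \<alpha> = insert None (Some ` {\<gamma>\<in>Field omega1. (\<alpha>, \<gamma>) \<in> omega1 \<and> \<gamma> \<noteq> \<alpha>})"

definition topL :: "nat set option set" where
  "topL = insert None (Some ` Field omega1)"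

definition Lop :: "nat set option set \<Rightarrow> bool" where
  "Lop U \<longleftrightarrow> U \<subseteq> topL \<and> (None \<in> U \<longrightarrow> (\<exists>\<alpha>\<in>Field omega1. tl1 \<alpha> \<subseteq> U))"

lemma L_omega1_eq: "L_omega1 = topology Lop"
  unfolding L_omega1_def Lop_def tl1_def topL_def by (rule refl)

lemma tl1_mono:
  assumes "(\<alpha>,\<beta>) \<in> omega1" shows "tl1 \<beta> \<subseteq> tl1 \<alpha>"
proof
  fix x assume "x \<in> tl1 \<beta>"
  then consider "x = None" | \<gamma> where "x = Some \<gamma>" "\<gamma> \<in> Field omega1" "(\<beta>,\<gamma>) \<in> omega1" "\<gamma> \<noteq> \<beta>"
    unfolding tl1_def by blast
  then show "x \<in> tl1 \<alpha>"
  proof cases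
    case 1 then show ?thesis unfolding tl1_def by simp
  next
    case 2
    have "(\<alpha>,\<gamma>) \<in> omega1" using co_trans[OF assms 2(3)] .
    moreover have "\<gamma> \<noteq> \<alpha>" using co_antisym[OF assms] 2 by auto
    ultimately show ?thesis using 2 unfolding tl1_def by simp
  qed
qed

lemma tl1_sub: "tl1 \<alpha> \<subseteq> topL"
  unfolding tl1_def topL_def by auto

lemma istop: "istopology Lop"
  unfolding istopology_def
proof (intro conjI allI impI)
  fix S T assume S: "Lop S" and T: "Lop T"
  show "Lop (S \<inter> T)"
  proof (cases "None \<in> S \<inter> T")
    case True
    then obtain a b where a: "a \<in> Field omega1" "tl1 a \<subseteq> S" and b: "b \<in> Field omega1" "tl1 b \<subseteq> T"
      using S T unfolding Lop_def by blast
    have "\<exists>c\<in>Field omega1. tl1 c \<subseteq> S \<inter> T"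
    proof (cases "(a,b) \<in> omega1")
      case True
      then show ?thesis using tl1_mono[OF True] a b by blast
    next
      case False
      then have "(b,a) \<in> omega1" using co_total[OF a(1) b(1)] by blast
      then show ?thesis using tl1_mono[of b a] a b by blast
    qed
    then show ?thesis using S T unfolding Lop_def by blast
  next
    case False then show ?thesis using S T unfolding Lop_def by blast
  qed
next
  fix K assume K: "\<forall>k\<in>K. Lop k"
  show "Lop (\<Union>K)"
    unfolding Lop_def
  proof (intro conjI impI)
    show "\<Union>K \<subseteq> topL" using K unfolding Lop_def by blast
    assume "None \<in> \<Union>K"
    then obtain k where "k \<in> K" "None \<in> k" by blast
    then obtain a where "a \<in> Field omega1" "tl1 a \<subseteq> k" using K unfolding Lop_def by blast
    then show "\<exists>\<alpha>\<in>Field omega1. tl1 \<alpha> \<subseteq> \<Union>K" using \<open>k \<in> K\<close> by blast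
  qed
qed

lemma openL: "openin L_omega1 U \<longleftrightarrow> Lop U"
  unfolding L_omega1_eq using istop by simp

lemma topspaceL: "topspace L_omega1 = topL"
proof -
  obtain a where "a \<in> Field omega1" using co_uncountable by fastforce
  then have "Lop topL" unfolding Lop_def using tl1_sub by blast
  then show ?thesis unfolding topspace_def openL Lop_def by blast
qed

lemma p_space_L: "p_space L_omega1"
  unfolding p_space_def
proof (intro allI impI)
  fix U :: "nat \<Rightarrow> nat set option set" assume U: "\<forall>n. openin L_omega1 (U n)"
  then have U': "\<And>n. Lop (U n)" by (simp add: openL)
  show "openin L_omega1 (\<Inter>n. U n)"
    unfolding openL Lop_def
  proof (intro conjI impI)
    show "(\<Inter>n. U n) \<subseteq> topL" using U'[of 0] unfolding Lop_def by blast
    assume "None \<in> (\<Inter>n. U n)"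
    then have "\<forall>n. \<exists>a\<in>Field omega1. tl1 a \<subseteq> U n" using U' unfolding Lop_def by blast
    then obtain a where a: "\<And>n. a n \<in> Field omega1" "\<And>n. tl1 (a n) \<subseteq> U n" by metis
    obtain b where b: "b \<in> Field omega1" "\<forall>x\<in>range a. (x,b) \<in> omega1"
      using co_bound[of "range a"] a(1) by blast
    have "tl1 b \<subseteq> U n" for n using tl1_mono[of "a n" b] b(2) a(2)[of n] by blast
    then show "\<exists>\<alpha>\<in>Field omega1. tl1 \<alpha> \<subseteq> (\<Inter>n. U n)" using b by blast
  qed
qed

lemma noncompactL:
  assumes D: "D \<subseteq> Field omega1" "countable D" "infinite D" and C: "Some ` D \<subseteq> C"
  shows "\<not> compactin L_omega1 C"
proof
  assume cpt: "compactin L_omega1 C"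
  obtain b where b: "b \<in> Field omega1" "\<forall>a\<in>D. (a,b) \<in> omega1"
    using co_bound[OF D(2) D(1)] by blast
  define \<U> where "\<U> = insert (tl1 b) ((\<lambda>\<gamma>. {Some \<gamma>}) ` Field omega1)"
  have op: "\<forall>U\<in>\<U>. openin L_omega1 U"
  proof
    fix U assume "U \<in> \<U>"
    then consider "U = tl1 b" | \<gamma> where "\<gamma> \<in> Field omega1" "U = {Some \<gamma>}" unfolding \<U>_def by blast
    then show "openin L_omega1 U"
    proof cases
      case 1 then show ?thesis unfolding openL Lop_def using tl1_sub b(1) by blast
    next
      case 2 then show ?thesis unfolding openL Lop_def topL_def by blast
    qed
  qed
  have "C \<subseteq> topL" using cpt topspaceL unfolding compactin_def by blast
  moreover have "topL \<subseteq> \<Union>\<U>"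
  proof
    fix x assume "x \<in> topL"
    then show "x \<in> \<Union>\<U>" unfolding topL_def \<U>_def tl1_def by blast
  qed
  ultimately have "C \<subseteq> \<Union>\<U>" by blast
  then obtain \<F> where F: "finite \<F>" "\<F> \<subseteq> \<U>" "C \<subseteq> \<Union>\<F>"
    using cpt op unfolding compactin_def by meson
  have notin: "Some a \<notin> tl1 b" if "a \<in> D" for a
  proof
    assume "Some a \<in> tl1 b"
    then have "(b,a) \<in> omega1" "a \<noteq> b" unfolding tl1_def by auto
    with b(2) that co_antisym show False by blast
  qed
  have "Some ` D \<subseteq> \<Union>(\<F> - {tl1 b})" using F(3) C notin by blast
  moreover have "finite (\<Union>(\<F> - {tl1 b}))"
  proof (rule finite_Union)
    show "finite (\<F> - {tl1 b})" using F(1) by simp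
    show "\<And>M. M \<in> \<F> - {tl1 b} \<Longrightarrow> finite M" using F(2) unfolding \<U>_def by blast
  qed
  ultimately have "finite (Some ` D)" by (rule finite_subset)
  then have "finite D" by (simp add: finite_image_iff)
  with D(3) show False by simp
qed

primrec treeA :: "('a \<Rightarrow> nat \<Rightarrow> nat) \<Rightarrow> 'a set \<Rightarrow> nat \<Rightarrow> 'a set" where
  "treeA g A 0 = A"
| "treeA g A (Suc n) = {a \<in> treeA g A n. g a n = (SOME k. uncountable {a \<in> treeA g A n. g a n = k})}"

lemma treeA_unc: "uncountable A \<Longrightarrow> uncountable (treeA g A n)"
proof (induction n)
  case 0 then show ?case by simp
next
  case (Suc n)
  let ?B = "treeA g A n"
  have "\<exists>k. uncountable {a \<in> ?B. g a n = k}"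
  proof (rule ccontr)
    assume "\<not> ?thesis"
    then have "countable (\<Union>k. {a \<in> ?B. g a n = k})" by auto
    moreover have "(\<Union>k. {a \<in> ?B. g a n = k}) = ?B" by auto
    ultimately show False using Suc by simp
  qed
  then have "uncountable {a \<in> ?B. g a n = (SOME k. uncountable {a \<in> ?B. g a n = k})}"
    by (rule someI_ex)
  then show ?case by simp
qed

lemma treeA_mono: "m \<le> n \<Longrightarrow> treeA g A n \<subseteq> treeA g A m"
proof (induction n)
  case 0 then show ?case by simp
next
  case (Suc n)
  then show ?case by (cases "m = Suc n") auto
qed

lemma treeA_val:
  assumes "a \<in> treeA g A m" "i < m"
  shows "g a i = (SOME k. uncountable {a \<in> treeA g A i. g a i = k})"
proof -
  have "a \<in> treeA g A (Suc i)" using treeA_mono[of "Suc i" m g A] assms by auto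
  then show ?thesis by simp
qed

lemma treeA_sub: "treeA g A n \<subseteq> A"
  using treeA_mono[of 0 n g A] by simp

primrec pk :: "(nat \<Rightarrow> 'a set) \<Rightarrow> nat \<Rightarrow> 'a list" where
  "pk T 0 = []"
| "pk T (Suc m) = pk T m @ [SOME a. a \<in> T m \<and> a \<notin> set (pk T m)]"

lemma inj_pick:
  fixes T :: "nat \<Rightarrow> 'a set"
  assumes "\<And>m. infinite (T m)"
  shows "\<exists>\<alpha>. inj \<alpha> \<and> (\<forall>m. \<alpha> m \<in> T m)"
proof -
  define \<alpha> where "\<alpha> m = (SOME a. a \<in> T m \<and> a \<notin> set (pk T m))" for m
  have set_pk: "set (pk T m) = \<alpha> ` {..<m}" for m
    by (induction m) (auto simp: \<alpha>_def lessThan_Suc)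
  have ex: "\<exists>a. a \<in> T m \<and> a \<notin> set (pk T m)" for m
  proof -
    have "infinite (T m - set (pk T m))" using assms[of m] by simp
    then obtain a where "a \<in> T m - set (pk T m)" using infinite_imp_nonempty by blast
    then show ?thesis by blast
  qed
  have P: "\<alpha> m \<in> T m \<and> \<alpha> m \<notin> \<alpha> ` {..<m}" for m
    using someI_ex[OF ex[of m]] set_pk[of m] unfolding \<alpha>_def[symmetric] by simp
  have "inj \<alpha>"
  proof (rule injI)
    fix x y assume "\<alpha> x = \<alpha> y"
    then show "x = y" using P[of x] P[of y] by (metis image_eqI lessThan_iff linorder_neqE_nat)
  qed
  then show ?thesis using P by blast
qed

lemma not_frolik: "\<not> frolik_space_over TYPE('b) L_omega1"
proof
  assume "frolik_space_over TYPE('b) L_omega1"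
  then obtain S :: "nat \<Rightarrow> 'b topology" and F where
    sc: "\<And>n. sigma_compact_space (S n)" and Fc: "closedin (product_topology S UNIV) F" and
    hs: "L_omega1 homeomorphic_space subtopology (product_topology S UNIV) F"
    unfolding frolik_space_over_def by blast
  define P where "P = product_topology S UNIV"
  obtain e h where hm: "homeomorphic_maps L_omega1 (subtopology P F) e h"
    using hs unfolding homeomorphic_space_def P_def by blast
  have e_cont: "continuous_map L_omega1 (subtopology P F) e"
    and h_cont: "continuous_map (subtopology P F) L_omega1 h"
    and he: "\<And>x. x \<in> topspace L_omega1 \<Longrightarrow> h (e x) = x"
    using hm unfolding homeomorphic_maps_def by blast+
  have "\<forall>n. \<exists>Kn::nat\<Rightarrow>'b set. (\<forall>k. compactin (S n) (Kn k)) \<and> topspace (S n) = (\<Union>k. Kn k)"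
  proof
    fix n
    from sc[of n] show "\<exists>Kn::nat\<Rightarrow>'b set. (\<forall>k. compactin (S n) (Kn k)) \<and> topspace (S n) = (\<Union>k. Kn k)"
      unfolding sigma_compact_space_def by (elim exE) (rule exI, assumption)
  qed
  from choice[OF this] obtain K :: "nat \<Rightarrow> nat \<Rightarrow> 'b set" where
    K0: "\<forall>n. (\<forall>k. compactin (S n) (K n k)) \<and> topspace (S n) = (\<Union>k. K n k)"
    by (elim exE) (erule that)
  have K: "\<And>n k. compactin (S n) (K n k)" "\<And>n. topspace (S n) = (\<Union>k. K n k)"
    using K0 by simp_all
  have e_in: "e x \<in> F \<and> e x \<in> topspace P" if "x \<in> topL" for x
  proof -
    have "e x \<in> topspace (subtopology P F)"
      using continuous_map_image_subset_topspace[OF e_cont] that topspaceL by blast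
    then show ?thesis by simp
  qed
  have e_coord: "\<exists>k. e (Some a) n \<in> K n k" if "a \<in> Field omega1" for a n
  proof -
    have "Some a \<in> topL" using that unfolding topL_def by blast
    then have "e (Some a) \<in> topspace P" using e_in by blast
    then have "e (Some a) n \<in> topspace (S n)" unfolding P_def by (simp add: PiE_iff)
    then show ?thesis using K(2) by blast
  qed
  define g where "g a n = (SOME k. e (Some a) n \<in> K n k)" for a n
  have g: "e (Some a) n \<in> K n (g a n)" if "a \<in> Field omega1" for a n
    unfolding g_def using someI_ex[OF e_coord[OF that]] .
  define T where "T = treeA g (Field omega1)"
  define c where "c i = (SOME k. uncountable {a \<in> T i. g a i = k})" for i
  have Tunc: "uncountable (T m)" for m unfolding T_def by (rule treeA_unc[OF co_uncountable])
  have Tinf: "infinite (T m)" for m using Tunc[of m] countable_finite by auto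
  obtain \<alpha> :: "nat \<Rightarrow> nat set" where \<alpha>: "inj \<alpha>" "\<And>m. \<alpha> m \<in> T m"
    using inj_pick[of T, OF Tinf] by (elim exE conjE) (erule that, blast)
  have \<alpha>F: "\<alpha> m \<in> Field omega1" for m
    using \<alpha>(2)[of m] treeA_sub[of g "Field omega1" m] unfolding T_def by blast
  have \<alpha>K: "e (Some (\<alpha> m)) i \<in> K i (c i)" if "i < m" for i m
  proof -
    have "g (\<alpha> m) i = c i" using treeA_val[OF \<alpha>(2)[of m, unfolded T_def] that] unfolding c_def T_def .
    then show ?thesis using g[OF \<alpha>F[of m], of i] by simp
  qed
  define L where "L i = K i (c i) \<union> (\<lambda>m. e (Some (\<alpha> m)) i) ` {..i}" for i
  have Lc: "compactin (S i) (L i)" for i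
    unfolding L_def
  proof (rule compactin_Un)
    show "compactin (S i) (K i (c i))" by (rule K(1))
    show "compactin (S i) ((\<lambda>m. e (Some (\<alpha> m)) i) ` {..i})"
    proof (rule finite_imp_compactin)
      show "finite ((\<lambda>m. e (Some (\<alpha> m)) i) ` {..i})" by simp
      show "(\<lambda>m. e (Some (\<alpha> m)) i) ` {..i} \<subseteq> topspace (S i)"
      proof
        fix y assume "y \<in> (\<lambda>m. e (Some (\<alpha> m)) i) ` {..i}"
        then obtain m where y: "y = e (Some (\<alpha> m)) i" by blast
        have "Some (\<alpha> m) \<in> topL" using \<alpha>F unfolding topL_def by blast
        then have "e (Some (\<alpha> m)) \<in> topspace P" using e_in by blast
        then show "y \<in> topspace (S i)" unfolding y P_def by (simp add: PiE_iff)
      qed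
    qed
  qed
  define Q where "Q = PiE UNIV L"
  have Qc: "compactin P Q" unfolding Q_def P_def compactin_PiE using Lc by blast
  have FQc: "compactin (subtopology P F) (F \<inter> Q)"
    unfolding compactin_subtopology using closed_Int_compactin[OF Fc[folded P_def] Qc] by blast
  have hc: "compactin L_omega1 (h ` (F \<inter> Q))" by (rule image_compactin[OF FQc h_cont])
  have sub: "Some ` range \<alpha> \<subseteq> h ` (F \<inter> Q)"
  proof
    fix x assume "x \<in> Some ` range \<alpha>"
    then obtain m where x: "x = Some (\<alpha> m)" by blast
    have xt: "x \<in> topL" using \<alpha>F unfolding x topL_def by blast
    have "e x \<in> Q" unfolding Q_def PiE_iff
    proof (intro conjI ballI)
      fix i :: nat
      show "e x i \<in> L i"
      proof (cases "i < m")
        case True then show ?thesis using \<alpha>K unfolding L_def x by blast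
      next
        case False then show ?thesis unfolding L_def x by auto
      qed
    qed simp
    moreover have "e x \<in> F" using e_in xt by blast
    moreover have "h (e x) = x" using he xt topspaceL by simp
    ultimately show "x \<in> h ` (F \<inter> Q)" by (metis IntI image_eqI)
  qed
  have "\<not> compactin L_omega1 (h ` (F \<inter> Q))"
  proof (rule noncompactL[OF _ _ _ sub])
    show "range \<alpha> \<subseteq> Field omega1" using \<alpha>F by blast
    show "countable (range \<alpha>)" by simp
    show "infinite (range \<alpha>)" using \<alpha>(1) by (simp add: range_inj_infinite)
  qed
  with hc show False by simp
qed

theorem mainTheorem7:
  shows "p_space L_omega1 \<and> \<not> frolik_space_over TYPE('b) L_omega1"
  using p_space_L not_frolik by blast

end
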